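(* Let $\mathcal{H}$ be a complex Hilbert space and $A,B,X\in\mathcal{B}(\mathcal{H})$. Then \[ \omega(A^{*}XB)\leq \frac{1}{4}\|AA^{*}X+XBB^{*}\|+\frac{1}{2}\,\omega\!\left(\begin{bmatrix} XBA^{*}&0\\ 0& BA^{*}X \end{bmatrix}\right), \] where the $2\times 2$ operator matrix acts on $\mathcal{H}\oplus\mathcal{H}$.
   Context: $\omega(T)=\sup\{|\langle Tx,x\rangle|:\|x\|=1\}$ denotes the numerical radius and $\|\cdot\|$ the operator norm. *)

theory Defs
  imports "HOL-Analysis.Analysis"
begin

class complex_inner = real_normed_vector +
  fixes scaleC :: "complex \<Rightarrow> 'a \<Rightarrow> 'a"
    and cinner :: "'a \<Rightarrow> 'a \<Rightarrow> complex"
  assumes scaleC_add_right: "scaleC c (x + y) = scaleC c x + scaleC c y"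
    and scaleC_add_left: "scaleC (c + d) x = scaleC c x + scaleC d x"
    and scaleC_scaleC: "scaleC c (scaleC d x) = scaleC (c * d) x"
    and scaleC_one: "scaleC 1 x = x"
    and scaleR_scaleC: "scaleR r x = scaleC (complex_of_real r) x"
    and cinner_commute: "cinner x y = cnj (cinner y x)"
    and cinner_add_left: "cinner (x + y) z = cinner x z + cinner y z"
    and cinner_scaleC_left: "cinner (scaleC c x) y = cnj c * cinner x y"
    and cinner_self_eq_zero: "cinner x x = 0 \<longleftrightarrow> x = 0"
    and norm_eq_sqrt_cinner: "norm x = sqrt (Re (cinner x x))"

class chilbert_space = complex_inner + complete_space

definition bounded_op :: "('a::complex_inner \<Rightarrow> 'a) \<Rightarrow> bool" where
  "bounded_op T \<longleftrightarrow> bounded_linear T \<and> (\<forall>c x. T (scaleC c x) = scaleC c (T x))"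

definition cadjoint :: "('a::complex_inner \<Rightarrow> 'a) \<Rightarrow> ('a \<Rightarrow> 'a)" where
  "cadjoint T = (THE S. \<forall>x y. cinner (T x) y = cinner x (S y))"

text \<open>Numerical radius  w(T) = sup { |<T x, x>| : ||x|| = 1 }.  (0 is inserted only so
that the supremum is also 0 on the trivial space, where there are no unit vectors;
all values are nonnegative, so this does not change anything otherwise.)\<close>
definition numerical_radius :: "('a::complex_inner \<Rightarrow> 'a) \<Rightarrow> real" where
  "numerical_radius T = Sup (insert 0 {cmod (cinner (T x) x) | x. norm x = 1})"

text \<open>The direct sum H (+) H, realised as the product type with the componentwise
complex structure and inner product <(x1,y1),(x2,y2)> = <x1,x2> + <y1,y2>.\<close>

instantiation prod :: (complex_inner, complex_inner) complex_inner
begin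

definition scaleC_prod_def:
  "scaleC c p = (scaleC c (fst p), scaleC c (snd p))"

definition cinner_prod_def:
  "cinner p q = cinner (fst p) (fst q) + cinner (snd p) (snd q)"

lemma cinner_self_Im: "Im (cinner x x) = 0" for x :: "'c::complex_inner"
  using cinner_commute[of x x] by (metis cnj.simps(2) neg_equal_zero)

lemma cinner_self_Re_nonneg: "Re (cinner x x) \<ge> 0" for x :: "'c::complex_inner"
proof (rule ccontr)
  assume "\<not> Re (cinner x x) \<ge> 0"
  then have "Re (cinner x x) < 0" by simp
  then have "sqrt (Re (cinner x x)) < 0" by simp
  then show False using norm_eq_sqrt_cinner[of x] norm_ge_zero[of x] by linarith
qed

lemma cinner_self_eq_norm2: "cinner x x = complex_of_real ((norm x)\<^sup>2)" for x :: "'c::complex_inner"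
  using cinner_self_Im[of x] cinner_self_Re_nonneg[of x] norm_eq_sqrt_cinner[of x]
  by (simp add: complex_eq_iff)

instance
proof
  fix c d :: complex and x y z :: "'a \<times> 'b" and r :: real
  show "scaleC c (x + y) = scaleC c x + scaleC c y"
    by (simp add: scaleC_prod_def scaleC_add_right)
  show "scaleC (c + d) x = scaleC c x + scaleC d x"
    by (simp add: scaleC_prod_def scaleC_add_left)
  show "scaleC c (scaleC d x) = scaleC (c * d) x"
    by (simp add: scaleC_prod_def scaleC_scaleC)
  show "scaleC 1 x = x"
    by (simp add: scaleC_prod_def scaleC_one)
  show "scaleR r x = scaleC (complex_of_real r) x"
    by (simp add: scaleC_prod_def scaleR_prod_def scaleR_scaleC)
  show "cinner x y = cnj (cinner y x)"
    by (simp add: cinner_prod_def cinner_commute[of "fst x"] cinner_commute[of "snd x"])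
  show "cinner (x + y) z = cinner x z + cinner y z"
    by (simp add: cinner_prod_def cinner_add_left)
  show "cinner (scaleC c x) y = cnj c * cinner x y"
    by (simp add: cinner_prod_def scaleC_prod_def cinner_scaleC_left algebra_simps)
  show "norm x = sqrt (Re (cinner x x))"
    by (simp add: cinner_prod_def norm_prod_def cinner_self_eq_norm2)
  show "cinner x x = 0 \<longleftrightarrow> x = 0"
  proof
    assume "cinner x x = 0"
    then have "complex_of_real ((norm (fst x))\<^sup>2 + (norm (snd x))\<^sup>2) = 0"
      by (simp add: cinner_prod_def cinner_self_eq_norm2)
    then have "(norm (fst x))\<^sup>2 + (norm (snd x))\<^sup>2 = 0" by (simp only: of_real_eq_0_iff)
    then have "norm (fst x) = 0 \<and> norm (snd x) = 0"
      by (simp add: add_nonneg_eq_0_iff)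
    then show "x = 0" by (simp add: prod_eq_iff)
  next
    assume "x = 0"
    then show "cinner x x = 0"
      using cinner_self_eq_zero[of "0::'a"] cinner_self_eq_zero[of "0::'b"]
      by (simp add: cinner_prod_def zero_prod_def)
  qed
qed

end

instance prod :: (chilbert_space, chilbert_space) chilbert_space ..

definition op_matrix :: "('a \<Rightarrow> 'a) \<Rightarrow> ('a \<Rightarrow> 'a) \<Rightarrow> ('a \<Rightarrow> 'a) \<Rightarrow> ('a \<Rightarrow> 'a)
    \<Rightarrow> ('a::complex_inner \<times> 'a \<Rightarrow> 'a \<times> 'a)" where
  "op_matrix T11 T12 T21 T22 = (\<lambda>(x, y). (T11 x + T12 y, T21 x + T22 y))"

end

theory Submission
  imports Defs
begin


lemma scaleC_zero_right[simp]: "scaleC c (0::'a::complex_inner) = 0"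
proof -
  have "scaleC c (0::'a) + scaleC c 0 = scaleC c 0 + 0" by (simp flip: scaleC_add_right)
  then show ?thesis by simp
qed

lemma scaleC_zero_left[simp]: "scaleC 0 (x::'a::complex_inner) = 0"
  using scaleR_scaleC[of 0 x] by simp

lemma scaleC_minus_right: "scaleC c (- x) = - scaleC c (x::'a::complex_inner)"
proof -
  have "scaleC c x + scaleC c (-x) = 0" by (simp flip: scaleC_add_right)
  then show ?thesis by (simp add: eq_neg_iff_add_eq_0 add.commute)
qed

lemma scaleC_diff_right: "scaleC c (x - y) = scaleC c x - scaleC c (y::'a::complex_inner)"
  by (metis diff_conv_add_uminus scaleC_add_right scaleC_minus_right)

lemma scaleC_scaleR: "scaleC c (scaleR r x) = scaleR r (scaleC c (x::'a::complex_inner))"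
  by (simp add: scaleR_scaleC scaleC_scaleC mult.commute)

lemma cinner_add_right: "cinner x (y + z) = cinner x y + cinner (x::'a::complex_inner) z"
  by (metis cinner_commute cinner_add_left complex_cnj_add)

lemma cinner_scaleC_right: "cinner x (scaleC c y) = c * cinner (x::'a::complex_inner) y"
  by (metis cinner_commute cinner_scaleC_left complex_cnj_mult complex_cnj_cnj)

lemma cinner_zero_left[simp]: "cinner 0 (x::'a::complex_inner) = 0"
  using cinner_scaleC_left[of 0 x x] by simp

lemma cinner_zero_right[simp]: "cinner (x::'a::complex_inner) 0 = 0"
  using cinner_scaleC_right[of x 0 x] by simp

lemma cinner_minus_left: "cinner (- x) (y::'a::complex_inner) = - cinner x y"
  using cinner_add_left[of x "-x" y] by (simp add: eq_neg_iff_add_eq_0 add.commute)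

lemma cinner_minus_right: "cinner x (- y::'a::complex_inner) = - cinner x y"
  using cinner_add_right[of x y "-y"] by (simp add: eq_neg_iff_add_eq_0 add.commute)

lemma cinner_diff_left: "cinner (x - y) (z::'a::complex_inner) = cinner x z - cinner y z"
  by (metis diff_conv_add_uminus cinner_add_left cinner_minus_left)

lemma cinner_diff_right: "cinner x (y - z::'a::complex_inner) = cinner x y - cinner x z"
  by (metis diff_conv_add_uminus cinner_add_right cinner_minus_right)

lemma cinner_scaleR_left: "cinner (scaleR r x) (y::'a::complex_inner) = of_real r * cinner x y"
  by (simp add: scaleR_scaleC cinner_scaleC_left)

lemma cinner_scaleR_right: "cinner x (scaleR r y::'a::complex_inner) = of_real r * cinner x y"
  by (simp add: scaleR_scaleC cinner_scaleC_right)

lemma Re_cinner_self: "Re (cinner x (x::'a::complex_inner)) = (norm x)^2"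
  by (simp add: cinner_self_eq_norm2)

lemma norm_scaleC: "norm (scaleC c (x::'a::complex_inner)) = cmod c * norm x"
proof -
  have "(norm (scaleC c x))^2 = Re (cinner (scaleC c x) (scaleC c x))" by (rule Re_cinner_self[symmetric])
  also have "\<dots> = Re ((cnj c * c) * cinner x x)" by (metis cinner_scaleC_left cinner_scaleC_right mult.assoc)
  also have "cnj c * c = of_real ((cmod c)^2)" by (metis complex_norm_square mult.commute)
  finally have "(norm (scaleC c x))^2 = (cmod c * norm x)^2" by (simp add: Re_cinner_self power_mult_distrib)
  then show ?thesis by (simp add: power2_eq_iff_nonneg)
qed

lemma norm_add_sq: "(norm (x + y))^2 = (norm x)^2 + (norm y)^2 + 2 * Re (cinner x (y::'a::complex_inner))"
proof -
  have "Re (cinner y x) = Re (cinner x y)" by (metis cinner_commute complex_cnj_cnj cnj.sel(1))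
  then show ?thesis
    using Re_cinner_self[of "x+y"] by (simp add: cinner_add_left cinner_add_right Re_cinner_self)
qed

lemma norm_diff_sq: "(norm (x - y))^2 = (norm x)^2 + (norm y)^2 - 2 * Re (cinner x (y::'a::complex_inner))"
  using norm_add_sq[of x "-y"] by (simp add: cinner_minus_right)

lemma cinner_eq_zero_self: "cinner x x = 0 \<Longrightarrow> (x::'a::complex_inner) = 0"
  using cinner_self_eq_zero by blast

lemma cauchy_schwarz: "cmod (cinner x y) \<le> norm x * norm (y::'a::complex_inner)"
proof (cases "x = 0")
  case True then show ?thesis by simp
next
  case False
  define c where "c = cinner x y / of_real ((norm x)^2)"
  have nx: "norm x > 0" using False by simp
  have "0 \<le> (norm (y - scaleC c x))^2" by simp
  also have "\<dots> = (norm y)^2 + (cmod c * norm x)^2 - 2 * Re (cinner y (scaleC c x))"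
    by (simp add: norm_diff_sq norm_scaleC)
  also have "cinner y (scaleC c x) = c * cnj (cinner x y)"
    by (metis cinner_scaleC_right cinner_commute)
  also have "c * cnj (cinner x y) = of_real ((cmod (cinner x y))^2 / (norm x)^2)"
  proof -
    have "cinner x y * cnj (cinner x y) = of_real ((cmod (cinner x y))^2)" by (rule complex_norm_square[symmetric])
    then show ?thesis by (simp add: c_def)
  qed
  also have "(cmod c * norm x)^2 = (cmod (cinner x y))^2 / (norm x)^2"
  proof -
    have "cmod c = cmod (cinner x y) / (norm x)^2" by (simp add: c_def norm_divide norm_power)
    then show ?thesis using nx by (simp add: field_simps power2_eq_square)
  qed
  finally have "(cmod (cinner x y))^2 / (norm x)^2 \<le> (norm y)^2" by simp
  then have "(cmod (cinner x y))^2 \<le> (norm x * norm y)^2"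
    using nx by (simp add: field_simps power_mult_distrib)
  then show ?thesis by (simp add: power2_le_iff_abs_le)
qed

lemma Re_cinner_le: "Re (cinner x y) \<le> norm x * norm (y::'a::complex_inner)"
  using cauchy_schwarz[of x y] complex_Re_le_cmod[of "cinner x y"] by linarith

lemma parallelogram: "(norm (x + y))^2 + (norm (x - y))^2 = 2 * (norm x)^2 + 2 * (norm (y::'a::complex_inner))^2"
  by (simp add: norm_add_sq norm_diff_sq)

lemma cinner_ext: assumes "\<And>x. cinner x a = cinner x (b::'a::complex_inner)" shows "a = b"
proof -
  have "cinner (a - b) (a - b) = 0" using assms[of "a - b"] by (simp add: cinner_diff_right)
  then show ?thesis by (simp add: cinner_self_eq_zero)
qed

lemma riesz:
  fixes f :: "'a::chilbert_space \<Rightarrow> complex"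
  assumes add: "\<And>x y. f (x + y) = f x + f y" and sc: "\<And>c x. f (scaleC c x) = c * f x"
    and bnd: "\<And>x. cmod (f x) \<le> K * norm x"
  shows "\<exists>v. \<forall>x. f x = cinner v x"
proof (cases "\<forall>x. f x = 0")
  case True then show ?thesis by (intro exI[of _ 0]) simp
next
  case False
  then obtain w where fw: "f w \<noteq> 0" by auto
  have f0: "f 0 = 0" using add[of 0 0] by simp
  have fdiff: "f (x - y) = f x - f y" for x y
  proof -
    have "f x = f (x - y) + f y" using add[of "x - y" y] by simp
    then show ?thesis by simp
  qed
  have fsR: "\<And>r x. f (scaleR r x) = of_real r * f x" by (simp add: scaleR_scaleC sc)
  have bl: "bounded_linear f"
    by (rule bounded_linear_intro[where K=K]) (simp_all add: add fsR bnd mult.commute scaleR_conv_of_real)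
  define D where "D = (\<lambda>m. norm (w - m)) ` {m. f m = 0}"
  define d where "d = Inf D"
  have Dne: "D \<noteq> {}" using f0 by (auto simp: D_def)
  have Dbdd: "bdd_below D" unfolding D_def by (rule bdd_belowI[of _ 0]) auto
  have dle: "\<And>m. f m = 0 \<Longrightarrow> d \<le> norm (w - m)"
    unfolding d_def by (rule cInf_lower[OF _ Dbdd]) (auto simp: D_def)
  have d0: "0 \<le> d" unfolding d_def by (rule cInf_greatest[OF Dne]) (auto simp: D_def)
  have "\<forall>n. \<exists>m. f m = 0 \<and> (norm (w - m))^2 < d^2 + inverse (real (Suc n))"
  proof
    fix n
    have "d < sqrt (d^2 + inverse (real (Suc n)))"
    proof -
      have h: "sqrt (d^2) < sqrt (d^2 + inverse (real (Suc n)))" by (rule real_sqrt_less_mono) simp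
      have e: "sqrt (d^2) = d" using d0 by simp
      show ?thesis using h unfolding e .
    qed
    then obtain y where "y \<in> D" "y < sqrt (d^2 + inverse (real (Suc n)))"
      using cInf_lessD[OF Dne] by (auto simp: d_def)
    then obtain m where m: "f m = 0" "norm (w - m) < sqrt (d^2 + inverse (real (Suc n)))"
      by (auto simp: D_def)
    have "(norm (w - m))^2 < (sqrt (d^2 + inverse (real (Suc n))))^2"
      by (rule power_strict_mono) (use m in auto)
    also have "\<dots> = d^2 + inverse (real (Suc n))" by simp
    finally show "\<exists>m. f m = 0 \<and> (norm (w - m))^2 < d^2 + inverse (real (Suc n))" using m by blast
  qed
  from choice[OF this] obtain mm where mmall:
    "\<forall>n. f (mm n) = 0 \<and> (norm (w - mm n))^2 < d^2 + inverse (real (Suc n))" by blast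
  have mm0: "\<And>n. f (mm n) = 0" using mmall by blast
  have mm1: "\<And>n. (norm (w - mm n))^2 < d^2 + inverse (real (Suc n))" using mmall by blast
  have mid: "(norm (a - b))^2 \<le> 2*(norm (w - a))^2 + 2*(norm (w - b))^2 - 4*d^2"
    if ab: "f a = 0" "f b = 0" for a b
  proof -
    have fm: "f (scaleR (1/2) (a + b)) = 0" by (simp add: fsR add ab)
    have e1: "(w - a) + (w - b) = scaleR 2 (w - scaleR (1/2) (a + b))"
      by (simp add: algebra_simps scaleR_2)
    have "2 * d \<le> 2 * norm (w - scaleR (1/2) (a + b))" using dle[OF fm] by simp
    also have "\<dots> = norm ((w - a) + (w - b))" by (simp add: e1)
    finally have "(2*d)^2 \<le> (norm ((w - a) + (w - b)))^2"
      by (rule power_mono) (use d0 in simp)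
    moreover have "(w - a) - (w - b) = b - a" by simp
    moreover have "norm (b - a) = norm (a - b)" by (rule norm_minus_commute)
    ultimately show ?thesis using parallelogram[of "w - a" "w - b"] by (simp add: power_mult_distrib)
  qed
  have "Cauchy mm"
  proof (rule CauchyI)
    fix e :: real assume e: "0 < e"
    then have "0 < e^2 / 4" by simp
    then obtain N where N: "inverse (real (Suc N)) < e^2 / 4" using reals_Archimedean by blast
    have "\<forall>m\<ge>N. \<forall>n\<ge>N. norm (mm m - mm n) < e"
    proof (intro allI impI)
      fix m n assume mn: "N \<le> m" "N \<le> n"
      have im: "inverse (real (Suc m)) \<le> inverse (real (Suc N))"
        by (rule le_imp_inverse_le) (use mn in auto)
      have inn: "inverse (real (Suc n)) \<le> inverse (real (Suc N))"
        by (rule le_imp_inverse_le) (use mn in auto)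
      have "(norm (mm m - mm n))^2 \<le> 2*(norm (w - mm m))^2 + 2*(norm (w - mm n))^2 - 4*d^2"
        by (rule mid[OF mm0 mm0])
      also have "\<dots> < 2*(d^2 + inverse (real (Suc m))) + 2*(d^2 + inverse (real (Suc n))) - 4*d^2"
      proof -
        have gen2: "\<And>a b A B D::real. a < A \<Longrightarrow> b < B \<Longrightarrow> 2*a + 2*b - 4*D < 2*A + 2*B - 4*D"
          by simp
        show ?thesis by (rule gen2[OF mm1[of m] mm1[of n]])
      qed
      also have "\<dots> \<le> e^2"
      proof -
        have gen: "\<And>a b c D E::real. a \<le> c \<Longrightarrow> b \<le> c \<Longrightarrow> c < E/4 \<Longrightarrow> 2*(D+a) + 2*(D+b) - 4*D \<le> E"
          by (simp add: algebra_simps)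
        show ?thesis by (rule gen[OF im inn N])
      qed
      finally show "norm (mm m - mm n) < e" by (rule power2_less_imp_less) (use e in simp)
    qed
    then show "\<exists>M. \<forall>m\<ge>M. \<forall>n\<ge>M. norm (mm m - mm n) < e" by blast
  qed
  then obtain m0 where lim: "mm \<longlonglongrightarrow> m0" using Cauchy_convergent_iff convergent_def by blast
  have "(\<lambda>n. f (mm n)) \<longlonglongrightarrow> f m0" by (rule bounded_linear.tendsto[OF bl lim])
  then have fm0: "f m0 = 0" using mm0 by (simp add: LIMSEQ_const_iff)
  have "(norm (w - m0))^2 \<le> d^2 + 0"
  proof (rule LIMSEQ_le)
    show "(\<lambda>n. (norm (w - mm n))^2) \<longlonglongrightarrow> (norm (w - m0))^2"
      by (rule tendsto_power[OF tendsto_norm[OF tendsto_diff[OF tendsto_const lim]]])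
    show "(\<lambda>n. d^2 + inverse (real (Suc n))) \<longlonglongrightarrow> d^2 + 0"
      by (rule tendsto_add[OF tendsto_const LIMSEQ_inverse_real_of_nat])
    show "\<exists>N. \<forall>n\<ge>N. (norm (w - mm n))^2 \<le> d^2 + inverse (real (Suc n))"
      by (intro exI[of _ 0] allI impI less_imp_le mm1)
  qed
  then have nz: "norm (w - m0) \<le> d" using d0 by (intro power2_le_imp_le[of "norm (w - m0)" d]) auto
  define z where "z = w - m0"
  have z0: "z \<noteq> 0" using fw fm0 by (auto simp: z_def)
  have zmin: "norm z \<le> norm (z - m)" if "f m = 0" for m
  proof -
    have "f (m0 + m) = 0" using that fm0 by (simp add: add)
    then have "d \<le> norm (w - (m0 + m))" by (rule dle)
    then show ?thesis using nz by (simp add: z_def algebra_simps)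
  qed
  have orth: "cinner z m = 0" if fm: "f m = 0" for m
  proof (cases "m = 0")
    case True then show ?thesis by simp
  next
    case False
    define c where "c = cinner z m"
    define s where "s = cnj c / of_real ((norm m)^2)"
    have nm: "norm m > 0" using False by simp
    have "f (scaleC s m) = 0" using fm by (simp add: sc)
    then have "(norm z)^2 \<le> (norm (z - scaleC s m))^2" using zmin by (simp add: power_mono)
    also have "\<dots> = (norm z)^2 + (norm (scaleC s m))^2 - 2 * Re (cinner z (scaleC s m))"
      by (rule norm_diff_sq)
    also have "cinner z (scaleC s m) = of_real ((cmod c)^2 / (norm m)^2)"
    proof -
      have "cinner z (scaleC s m) = s * c" by (simp add: cinner_scaleC_right c_def)
      also have "\<dots> = (cnj c * c) / of_real ((norm m)^2)" by (simp add: s_def)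
      also have "cnj c * c = of_real ((cmod c)^2)" by (metis complex_norm_square mult.commute)
      finally show ?thesis by simp
    qed
    also have "norm (scaleC s m) = cmod c / norm m"
    proof -
      have "cmod s = cmod c / (norm m)^2" by (simp add: s_def norm_divide norm_power)
      then show ?thesis using nm by (simp add: norm_scaleC power2_eq_square)
    qed
    finally have "(cmod c)^2 / (norm m)^2 \<le> 0" using nm by (simp add: power_divide)
    then have "(cmod c)^2 \<le> 0" using nm by (simp add: divide_le_0_iff)
    then show ?thesis by (simp add: c_def)
  qed
  define v where "v = scaleC (cnj (f z) / of_real ((norm z)^2)) z"
  have "\<forall>x. f x = cinner v x"
  proof
    fix x
    have "f (scaleC (f x) z - scaleC (f z) x) = 0" by (simp add: fdiff sc mult.commute)
    then have "cinner z (scaleC (f x) z - scaleC (f z) x) = 0" by (rule orth)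
    then have "f x * cinner z z = f z * cinner z x"
      by (simp add: cinner_diff_right cinner_scaleC_right)
    then have "f x * of_real ((norm z)^2) = f z * cinner z x" by (simp add: cinner_self_eq_norm2)
    moreover have "cinner v x = f z * cinner z x / of_real ((norm z)^2)"
      by (simp add: v_def cinner_scaleC_left)
    ultimately have "f x * of_real ((norm z)^2) = cinner v x * of_real ((norm z)^2)"
      using z0 by simp
    then show "f x = cinner v x" using z0 by simp
  qed
  then show ?thesis by blast
qed

lemma bop_bl: "bounded_op T \<Longrightarrow> bounded_linear T" by (simp add: bounded_op_def)

lemma bop_hom: "bounded_op T \<Longrightarrow> T (scaleC c x) = scaleC c (T x)" by (simp add: bounded_op_def)

lemma bop_lin:
  assumes "bounded_op T"
  shows "T (x + y) = T x + T y" "T (x - y) = T x - T y" "T (scaleR r x) = scaleR r (T x)"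
    "T 0 = 0" "T (- x) = - T x"
proof -
  interpret bounded_linear T using assms by (simp add: bounded_op_def)
  show "T (x + y) = T x + T y" by (rule add)
  show "T (x - y) = T x - T y" by (rule diff)
  show "T (scaleR r x) = scaleR r (T x)" by (rule scaleR)
  show "T 0 = 0" by (rule zero)
  show "T (- x) = - T x" using diff[of 0 x] zero by simp
qed

lemma bop_bound: assumes "bounded_op T" obtains K where "K > 0" "\<And>x. norm (T x) \<le> K * norm x"
proof -
  interpret bounded_linear T using assms by (simp add: bounded_op_def)
  from pos_bounded obtain K where "K > 0" "\<And>x. norm (T x) \<le> norm x * K" by blast
  then show ?thesis using that by (simp add: mult.commute)
qed

lemma bop_comp: "bounded_op S \<Longrightarrow> bounded_op T \<Longrightarrow> bounded_op (\<lambda>x. S (T x))"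
  by (simp add: bounded_op_def bounded_linear_compose)

lemma bop_o: "bounded_op S \<Longrightarrow> bounded_op T \<Longrightarrow> bounded_op (S \<circ> T)"
  using bop_comp[of S T] by (simp add: o_def)

lemma bop_plus: "bounded_op S \<Longrightarrow> bounded_op T \<Longrightarrow> bounded_op (\<lambda>x. S x + T x)"
  by (simp add: bounded_op_def bounded_linear_add scaleC_add_right)

lemma bop_scal: assumes "bounded_op T" shows "bounded_op (\<lambda>x. scaleC c (T x))"
proof -
  obtain K where K: "K > 0" "\<And>x. norm (T x) \<le> K * norm x" using bop_bound[OF assms] by blast
  have "bounded_linear (\<lambda>x. scaleC c (T x))"
  proof (rule bounded_linear_intro[where K="cmod c * K"])
    show "scaleC c (T (x + y)) = scaleC c (T x) + scaleC c (T y)" for x y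
      by (simp add: bop_lin[OF assms] scaleC_add_right)
    show "scaleC c (T (scaleR r x)) = scaleR r (scaleC c (T x))" for r x
      by (simp add: bop_lin[OF assms] scaleC_scaleR)
    show "norm (scaleC c (T x)) \<le> norm x * (cmod c * K)" for x
      using mult_left_mono[OF K(2)[of x], of "cmod c"] by (simp add: norm_scaleC algebra_simps)
  qed
  moreover have "scaleC c (T (scaleC d x)) = scaleC d (scaleC c (T x))" for d x
    by (simp add: bop_hom[OF assms] scaleC_scaleC mult.commute)
  ultimately show ?thesis by (simp add: bounded_op_def)
qed

lemma bop_zero: "bounded_op (\<lambda>_::'a::complex_inner. 0::'a)"
  by (simp add: bounded_op_def)

lemma adjoint_prop:
  fixes T :: "'a::chilbert_space \<Rightarrow> 'a"
  assumes T: "bounded_op T"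
  shows "\<forall>x y. cinner (T x) y = cinner x (cadjoint T y)"
proof -
  obtain K where K: "K > 0" "\<And>x. norm (T x) \<le> K * norm x" using bop_bound[OF T] by blast
  have "\<forall>y. \<exists>v. \<forall>x. cinner (T x) y = cinner x v"
  proof
    fix y
    have "\<exists>v. \<forall>x. cinner y (T x) = cinner v x"
    proof (rule riesz[where K="norm y * K"])
      show "cinner y (T (x + z)) = cinner y (T x) + cinner y (T z)" for x z
        by (simp add: bop_lin[OF T] cinner_add_right)
      show "cinner y (T (scaleC c x)) = c * cinner y (T x)" for c x
        by (simp add: bop_hom[OF T] cinner_scaleC_right)
      show "cmod (cinner y (T x)) \<le> norm y * K * norm x" for x
      proof -
        have "cmod (cinner y (T x)) \<le> norm y * norm (T x)" by (rule cauchy_schwarz)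
        also have "\<dots> \<le> norm y * (K * norm x)" using K(2)[of x] by (simp add: mult_left_mono)
        finally show ?thesis by (simp add: mult.assoc)
      qed
    qed
    then obtain v where v: "\<forall>x. cinner y (T x) = cinner v x" by blast
    have "\<forall>x. cinner (T x) y = cinner x v"
    proof
      fix x
      have "cinner (T x) y = cnj (cinner y (T x))" by (rule cinner_commute)
      also have "\<dots> = cnj (cinner v x)" using v by simp
      also have "\<dots> = cinner x v" by (rule cinner_commute[symmetric])
      finally show "cinner (T x) y = cinner x v" .
    qed
    then show "\<exists>v. \<forall>x. cinner (T x) y = cinner x v" by blast
  qed
  from choice[OF this] obtain S where S: "\<forall>y x. cinner (T x) y = cinner x (S y)" by blast
  let ?P = "\<lambda>S. \<forall>x y. cinner (T x) y = cinner x (S y)"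
  have PS: "?P S" using S by blast
  have uniq: "S' = S" if "?P S'" for S'
  proof
    fix y
    show "S' y = S y"
    proof (rule cinner_ext)
      fix x
      show "cinner x (S' y) = cinner x (S y)" using that[rule_format, of x y] PS[rule_format, of x y] by simp
    qed
  qed
  have "?P (THE S. ?P S)" by (rule theI[of ?P S, OF PS uniq])
  then show ?thesis unfolding cadjoint_def .
qed

lemma adj: "bounded_op T \<Longrightarrow> cinner (T x) y = cinner x (cadjoint T y)"
  for T :: "'a::chilbert_space \<Rightarrow> 'a"
  using adjoint_prop by blast

lemma adj': "bounded_op T \<Longrightarrow> cinner (cadjoint T y) x = cinner y (T x)"
  for T :: "'a::chilbert_space \<Rightarrow> 'a"
proof -
  assume T: "bounded_op T"
  have "cinner (cadjoint T y) x = cnj (cinner x (cadjoint T y))" by (rule cinner_commute)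
  also have "\<dots> = cnj (cinner (T x) y)" by (simp add: adj[OF T])
  also have "\<dots> = cinner y (T x)" by (rule cinner_commute[symmetric])
  finally show ?thesis .
qed

lemma bop_adj:
  fixes T :: "'a::chilbert_space \<Rightarrow> 'a"
  assumes T: "bounded_op T" shows "bounded_op (cadjoint T)"
proof -
  obtain K where K: "K > 0" "\<And>x. norm (T x) \<le> K * norm x" using bop_bound[OF T] by blast
  have ad: "cadjoint T (y + z) = cadjoint T y + cadjoint T z" for y z
    by (rule cinner_ext) (simp add: adj[OF T, symmetric] cinner_add_right)
  have hom: "cadjoint T (scaleC c y) = scaleC c (cadjoint T y)" for c y
    by (rule cinner_ext) (simp add: adj[OF T, symmetric] cinner_scaleC_right)
  have bnd: "norm (cadjoint T y) \<le> K * norm y" for y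
  proof (cases "cadjoint T y = 0")
    case True then show ?thesis using K by simp
  next
    case False
    have "(norm (cadjoint T y))^2 = Re (cinner (cadjoint T y) (cadjoint T y))" by (simp add: Re_cinner_self)
    also have "\<dots> = Re (cinner (T (cadjoint T y)) y)" by (simp add: adj[OF T])
    also have "\<dots> \<le> norm (T (cadjoint T y)) * norm y" by (rule Re_cinner_le)
    also have "\<dots> \<le> K * norm (cadjoint T y) * norm y" using K(2) by (simp add: mult_right_mono)
    finally have "norm (cadjoint T y) * norm (cadjoint T y) \<le> norm (cadjoint T y) * (K * norm y)"
      by (simp add: power2_eq_square algebra_simps)
    then show ?thesis using False by simp
  qed
  have "bounded_linear (cadjoint T)"
    by (rule bounded_linear_intro[where K=K]) (simp_all add: ad scaleR_scaleC hom bnd mult.commute)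
  then show ?thesis using hom by (simp add: bounded_op_def)
qed

lemma nr_upper:
  fixes T :: "'a::complex_inner \<Rightarrow> 'a"
  assumes hom: "\<And>c x. T (scaleC c x) = scaleC c (T x)"
    and bnd: "\<And>x. cmod (cinner (T x) x) \<le> C * (norm x)^2"
  shows "0 \<le> numerical_radius T" and "cmod (cinner (T p) p) \<le> numerical_radius T * (norm p)^2"
proof -
  let ?S = "insert 0 {cmod (cinner (T x) x) | x. norm x = 1}"
  have bdd: "bdd_above ?S"
  proof (rule bdd_aboveI[of _ "max 0 C"])
    fix s assume "s \<in> ?S"
    then consider "s = 0" | x where "s = cmod (cinner (T x) x)" "norm x = 1" by blast
    then show "s \<le> max 0 C"
    proof cases
      case 1 then show ?thesis by simp
    next
      case 2 then show ?thesis using bnd[of x] by simp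
    qed
  qed
  show "0 \<le> numerical_radius T" unfolding numerical_radius_def by (rule cSup_upper[OF _ bdd]) simp
  show "cmod (cinner (T p) p) \<le> numerical_radius T * (norm p)^2"
  proof (cases "p = 0")
    case True
    have "T 0 = 0" using hom[of 0 0] by simp
    then show ?thesis using True by simp
  next
    case False
    define r where "r = 1 / norm p"
    define q where "q = scaleC (of_real r) p"
    have np: "norm p > 0" using False by simp
    have "norm q = \<bar>r\<bar> * norm p" by (simp only: q_def norm_scaleC norm_of_real)
    then have nq: "norm q = 1" using np by (simp add: r_def)
    have "cinner (T q) q = (cnj (of_real r) * of_real r) * cinner (T p) p"
      by (simp add: q_def hom cinner_scaleC_left cinner_scaleC_right mult.assoc)
    also have "cnj (of_real r) * of_real r = (of_real (r * r) :: complex)" by simp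
    finally have "cmod (cinner (T q) q) = r * r * cmod (cinner (T p) p)"
      by (simp add: norm_mult norm_divide r_def)
    moreover have "cmod (cinner (T q) q) \<le> numerical_radius T"
      unfolding numerical_radius_def by (rule cSup_upper[OF _ bdd]) (use nq in blast)
    ultimately have "cmod (cinner (T p) p) / (norm p)^2 \<le> numerical_radius T"
      by (simp add: r_def power2_eq_square)
    then show ?thesis using np by (simp add: divide_le_eq)
  qed
qed

lemma nr_least:
  assumes "0 \<le> V" "\<And>x. norm x = 1 \<Longrightarrow> cmod (cinner (T x) x) \<le> V"
  shows "numerical_radius T \<le> V"
  unfolding numerical_radius_def by (rule cSup_least) (auto simp: assms)

lemma cinner_expand:
  "cinner (a - scaleR t b) (c - scaleR t d) =
     cinner a c - of_real t * cinner a d - of_real t * cinner b c + of_real t * of_real t * cinner b (d::'a::complex_inner)"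
  by (simp add: cinner_diff_left cinner_diff_right cinner_scaleR_left cinner_scaleR_right algebra_simps)

lemma pos_cs:
  fixes R :: "'a::complex_inner \<Rightarrow> 'a"
  assumes lin: "\<And>t. R (y - scaleR t (R y)) = R y - scaleR t (R (R y))"
   and pos: "\<And>v. 0 \<le> Re (cinner (R v) v)"
   and herm: "cinner (R (R y)) y = cinner (R y) (R y)"
   and bnd: "norm (R (R y)) \<le> L * norm (R y)" and L: "L > 0"
  shows "(norm (R y))^2 \<le> L * Re (cinner (R y) y)"
proof -
  define t where "t = 1 / L"
  define n where "n = (norm (R y))^2"
  define \<alpha> where "\<alpha> = Re (cinner (R y) y)"
  define \<beta> where "\<beta> = Re (cinner (R (R y)) (R y))"
  have hb: "\<beta> \<le> L * n"
  proof -
    have "\<beta> \<le> norm (R (R y)) * norm (R y)" unfolding \<beta>_def by (rule Re_cinner_le)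
    also have "\<dots> \<le> L * norm (R y) * norm (R y)" using bnd by (simp add: mult_right_mono)
    finally show ?thesis by (simp add: n_def power2_eq_square mult.assoc)
  qed
  have "0 \<le> Re (cinner (R (y - scaleR t (R y))) (y - scaleR t (R y)))" by (rule pos)
  also have "\<dots> = \<alpha> - t * n - t * n + t * t * \<beta>"
    unfolding lin cinner_expand herm by (simp add: \<alpha>_def \<beta>_def n_def Re_cinner_self)
  finally have h1: "0 \<le> \<alpha> - 2 * t * n + t * t * \<beta>" by (simp add: algebra_simps)
  have "t * t * \<beta> \<le> t * t * (L * n)" using hb by (simp add: mult_left_mono)
  also have "t * t * (L * n) = t * n" using L by (simp add: t_def)
  finally have "0 \<le> \<alpha> - t * n" using h1 by simp
  then have "n / L \<le> \<alpha>" by (simp add: t_def)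
  then show ?thesis using L by (simp add: n_def \<alpha>_def divide_le_eq mult.commute)
qed

lemma eig_bound:
  fixes S A B :: "'a::complex_inner \<Rightarrow> 'a"
  assumes S: "bounded_op S" and A: "bounded_op A" and B: "bounded_op B"
    and K0: "0 \<le> K"
    and F: "\<And>x. Re (cinner (B (S x)) (B x) + cinner (A (S x)) (A x)) \<le> K * ((norm (B x))^2 + (norm (A x))^2)"
    and H: "\<And>y w. cinner (S y) w = cinner y (S w)"
    and C: "\<And>x. norm (S x) \<le> C * (norm (A x) + norm (B x))"
    and C0: "C > 0"
    and x0: "norm x0 = 1"
  shows "Re (cinner (S x0) x0) \<le> K"
proof (rule ccontr)
  assume neg: "\<not> Re (cinner (S x0) x0) \<le> K"
  obtain cS where cS: "cS > 0" "\<And>x. norm (S x) \<le> cS * norm x" using bop_bound[OF S] by blast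
  obtain cA where cA: "cA > 0" "\<And>x. norm (A x) \<le> cA * norm x" using bop_bound[OF A] by blast
  obtain cB where cB: "cB > 0" "\<And>x. norm (B x) \<le> cB * norm x" using bop_bound[OF B] by blast
  define \<Sigma> where "\<Sigma> = {Re (cinner (S x) x) | x. norm x = 1}"
  have bdd: "bdd_above \<Sigma>"
  proof (rule bdd_aboveI[of _ cS])
    fix s assume "s \<in> \<Sigma>"
    then obtain x where x: "s = Re (cinner (S x) x)" "norm x = 1" by (auto simp: \<Sigma>_def)
    have "s \<le> norm (S x) * norm x" unfolding x(1) by (rule Re_cinner_le)
    also have "\<dots> \<le> cS" using cS(2)[of x] x(2) by simp
    finally show "s \<le> cS" .
  qed
  have ne: "\<Sigma> \<noteq> {}" using x0 by (auto simp: \<Sigma>_def)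
  define \<mu> where "\<mu> = Sup \<Sigma>"
  have "Re (cinner (S x0) x0) \<le> \<mu>" unfolding \<mu>_def by (rule cSup_upper[OF _ bdd]) (use x0 \<Sigma>_def in blast)
  then have muK: "\<mu> > K" using neg by simp
  then have mu0: "\<mu> > 0" using K0 by simp
  have P: "Re (cinner (S y) y) \<le> \<mu> * (norm y)^2" for y
  proof (cases "y = 0")
    case True then show ?thesis by (simp add: bop_lin[OF S])
  next
    case False
    define r where "r = 1 / norm y"
    have ny: "norm y > 0" using False by simp
    have n1: "norm (scaleR r y) = 1" using ny by (simp add: r_def)
    have "Re (cinner (S (scaleR r y)) (scaleR r y)) \<le> \<mu>"
      unfolding \<mu>_def by (rule cSup_upper[OF _ bdd]) (use n1 \<Sigma>_def in blast)
    moreover have "Re (cinner (S (scaleR r y)) (scaleR r y)) = r * r * Re (cinner (S y) y)"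
      by (simp add: bop_lin[OF S] cinner_scaleR_left cinner_scaleR_right)
    ultimately have "Re (cinner (S y) y) / (norm y)^2 \<le> \<mu>" by (simp add: r_def power2_eq_square)
    then show ?thesis using ny by (simp add: divide_le_eq)
  qed
  define R where "R = (\<lambda>y. scaleR \<mu> y - S y)"
  have Rpos: "0 \<le> Re (cinner (R v) v)" for v
    using P[of v] by (simp add: R_def cinner_diff_left cinner_scaleR_left Re_cinner_self)
  have Rlin: "R (y - scaleR t (R y)) = R y - scaleR t (R (R y))" for y t
    by (simp add: R_def bop_lin[OF S] algebra_simps)
  have Rherm: "cinner (R (R y)) y = cinner (R y) (R y)" for y
  proof -
    have "cinner (R (R y)) y = of_real \<mu> * cinner (R y) y - cinner (S (R y)) y"
      by (simp add: R_def cinner_diff_left cinner_scaleR_left)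
    also have "cinner (S (R y)) y = cinner (R y) (S y)" by (rule H)
    also have "of_real \<mu> * cinner (R y) y - cinner (R y) (S y) = cinner (R y) (R y)"
      by (simp add: R_def cinner_diff_right cinner_scaleR_right)
    finally show ?thesis .
  qed
  define L where "L = \<mu> + cS"
  have L0: "L > 0" using mu0 cS by (simp add: L_def)
  have Rbnd: "norm (R v) \<le> L * norm v" for v
  proof -
    have "norm (R v) \<le> norm (scaleR \<mu> v) + norm (S v)" unfolding R_def by (rule norm_triangle_ineq4)
    also have "\<dots> \<le> \<mu> * norm v + cS * norm v" using cS(2)[of v] mu0 by simp
    finally show ?thesis by (simp add: L_def algebra_simps)
  qed
  have CS: "(norm (R y))^2 \<le> L * Re (cinner (R y) y)" for y
    by (rule pos_cs[OF Rlin Rpos Rherm Rbnd L0])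
  define D where "D = cA^2 + cB^2"
  have D0: "D > 0" using cA cB by (simp add: D_def add_pos_pos)
  define \<eta> where "\<eta> = min (\<mu> / 2) (\<mu>^2 * (\<mu> - K) / (8 * C^2 * D))"
  have eta0: "\<eta> > 0" using mu0 muK C0 D0 by (simp add: \<eta>_def)
  define \<epsilon> where "\<epsilon> = \<eta>^2 / (2 * L)"
  have eps0: "\<epsilon> > 0" using eta0 L0 by (simp add: \<epsilon>_def)
  have "\<mu> - \<epsilon> < Sup \<Sigma>" using eps0 by (simp add: \<mu>_def)
  then obtain s where "s \<in> \<Sigma>" "\<mu> - \<epsilon> < s" using less_cSupD[OF ne] by blast
  then obtain x where x1: "norm x = 1" and xs: "\<mu> - \<epsilon> < Re (cinner (S x) x)" by (auto simp: \<Sigma>_def)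
  have alpha: "Re (cinner (R x) x) < \<epsilon>"
    using xs x1 by (simp add: R_def cinner_diff_left cinner_scaleR_left Re_cinner_self)
  have "(norm (R x))^2 < \<eta>^2"
  proof -
    have "(norm (R x))^2 \<le> L * Re (cinner (R x) x)" by (rule CS)
    also have "\<dots> < L * \<epsilon>" using alpha L0 by simp
    also have "L * \<epsilon> = \<eta>^2 / 2" using L0 by (simp add: \<epsilon>_def)
    also have "\<dots> < \<eta>^2" using eta0 by simp
    finally show ?thesis .
  qed
  then have Rx: "norm (R x) < \<eta>" by (rule power2_less_imp_less) (use eta0 in simp)
  define g where "g = (norm (B x))^2 + (norm (A x))^2"
  have Sx: "S x = scaleR \<mu> x - R x" by (simp add: R_def)
  have "Re (cinner (B (S x)) (B x) + cinner (A (S x)) (A x))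
        = \<mu> * g - Re (cinner (B (R x)) (B x) + cinner (A (R x)) (A x))"
    unfolding Sx by (simp add: bop_lin[OF A] bop_lin[OF B] cinner_diff_left cinner_scaleR_left
        Re_cinner_self g_def algebra_simps)
  then have "\<mu> * g - Re (cinner (B (R x)) (B x) + cinner (A (R x)) (A x)) \<le> K * g"
    using F[of x] by (simp add: g_def)
  moreover have "Re (cinner (B (R x)) (B x) + cinner (A (R x)) (A x)) \<le> D * norm (R x)"
  proof -
    have "Re (cinner (B (R x)) (B x)) \<le> norm (B (R x)) * norm (B x)" by (rule Re_cinner_le)
    also have "\<dots> \<le> (cB * norm (R x)) * (cB * norm x)"
      by (rule mult_mono[OF cB(2)[of "R x"] cB(2)[of x]]) (use cB(1) in simp_all)
    finally have 1: "Re (cinner (B (R x)) (B x)) \<le> cB^2 * norm (R x)" using x1 by (simp add: power2_eq_square mult.commute mult.left_commute)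
    have "Re (cinner (A (R x)) (A x)) \<le> norm (A (R x)) * norm (A x)" by (rule Re_cinner_le)
    also have "\<dots> \<le> (cA * norm (R x)) * (cA * norm x)"
      by (rule mult_mono[OF cA(2)[of "R x"] cA(2)[of x]]) (use cA(1) in simp_all)
    finally have 2: "Re (cinner (A (R x)) (A x)) \<le> cA^2 * norm (R x)" using x1 by (simp add: power2_eq_square mult.commute mult.left_commute)
    show ?thesis using 1 2 by (simp add: D_def algebra_simps)
  qed
  ultimately have G1: "(\<mu> - K) * g \<le> D * norm (R x)" by (simp add: algebra_simps)
  have "\<mu> \<le> norm (S x) + norm (R x)"
  proof -
    have "\<mu> = norm (scaleR \<mu> x)" using x1 mu0 by simp
    also have "scaleR \<mu> x = S x + R x" by (simp add: R_def)
    also have "norm (S x + R x) \<le> norm (S x) + norm (R x)" by (rule norm_triangle_ineq)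
    finally show ?thesis .
  qed
  then have "\<mu> / 2 \<le> norm (S x)" using Rx by (simp add: \<eta>_def)
  also have "\<dots> \<le> C * (norm (A x) + norm (B x))" by (rule C)
  finally have h1: "\<mu> / 2 \<le> C * (norm (A x) + norm (B x))" .
  have "(\<mu> / 2)^2 \<le> (C * (norm (A x) + norm (B x)))^2"
    by (rule power_mono[OF h1]) (use mu0 in simp)
  also have "\<dots> = C^2 * (norm (A x) + norm (B x))^2" by (simp add: power_mult_distrib)
  also have "\<dots> \<le> C^2 * (2 * g)"
  proof (rule mult_left_mono)
    show "(norm (A x) + norm (B x))^2 \<le> 2 * g"
      unfolding g_def using sum_squares_ge_zero
      by (smt (verit, best) power2_sum zero_le_power2 power2_diff)
  qed simp
  finally have h2: "\<mu>^2 / 4 \<le> 2 * C^2 * g" by (simp add: power_divide algebra_simps)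
  have "(\<mu> - K) * (\<mu>^2 / 4) \<le> (\<mu> - K) * (2 * C^2 * g)"
    using h2 muK by (simp add: mult_left_mono)
  also have "\<dots> = 2 * C^2 * ((\<mu> - K) * g)" by (simp add: algebra_simps)
  also have "\<dots> \<le> 2 * C^2 * (D * norm (R x))" using G1 by (simp add: mult_left_mono)
  also have "\<dots> < 2 * C^2 * (D * \<eta>)" using Rx C0 D0 by simp
  also have "\<dots> \<le> 2 * C^2 * (D * (\<mu>^2 * (\<mu> - K) / (8 * C^2 * D)))"
  proof -
    have e: "\<eta> \<le> \<mu>^2 * (\<mu> - K) / (8 * C^2 * D)" by (simp add: \<eta>_def)
    have "D * \<eta> \<le> D * (\<mu>^2 * (\<mu> - K) / (8 * C^2 * D))" by (rule mult_left_mono[OF e]) (use D0 in simp)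
    then show ?thesis by (rule mult_left_mono) simp
  qed
  also have "\<dots> = (\<mu> - K) * (\<mu>^2 / 4)" using C0 D0 by (simp add: field_simps)
  finally show False by simp
qed

lemma Re_cnj_le: "cmod u = 1 \<Longrightarrow> Re (cnj u * w) \<le> cmod w"
  by (metis complex_Re_le_cmod complex_mod_cnj mult_1 norm_mult)

lemma Re_u_cnj: "Re (u * cnj w) = Re (cnj u * w)"
  by simp

lemma normsq_prod: "(norm (a, b))^2 = (norm a)^2 + (norm (b::'a::real_normed_vector))^2"
  by (simp add: norm_Pair)

lemma key:
  fixes A B X :: "'a::chilbert_space \<Rightarrow> 'a"
  assumes A: "bounded_op A" and B: "bounded_op B" and X: "bounded_op X"
  shows "0 \<le> numerical_radius (op_matrix (X \<circ> B \<circ> cadjoint A) (\<lambda>_. 0) (\<lambda>_. 0) (B \<circ> cadjoint A \<circ> X))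
      + onorm (\<lambda>x. A (cadjoint A (X x)) + X (B (cadjoint B x))) / 2"
  and "cmod u = 1 \<Longrightarrow> norm x0 = 1 \<Longrightarrow> Re (cinner (scaleC u (cadjoint A (X (B x0))) + scaleC (cnj u) (cadjoint B (cadjoint X (A x0)))) x0)
    \<le> numerical_radius (op_matrix (X \<circ> B \<circ> cadjoint A) (\<lambda>_. 0) (\<lambda>_. 0) (B \<circ> cadjoint A \<circ> X))
      + onorm (\<lambda>x. A (cadjoint A (X x)) + X (B (cadjoint B x))) / 2"
proof -
  define Ad where "Ad = cadjoint A"
  define Bd where "Bd = cadjoint B"
  define Xd where "Xd = cadjoint X"
  have Ad: "bounded_op Ad" unfolding Ad_def by (rule bop_adj[OF A])
  have Bd: "bounded_op Bd" unfolding Bd_def by (rule bop_adj[OF B])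
  have Xd: "bounded_op Xd" unfolding Xd_def by (rule bop_adj[OF X])
  have adjA: "cinner (A v) w = cinner v (Ad w)" for v w unfolding Ad_def by (rule adj[OF A])
  have adjB: "cinner (B v) w = cinner v (Bd w)" for v w unfolding Bd_def by (rule adj[OF B])
  have adjX: "cinner (X v) w = cinner v (Xd w)" for v w unfolding Xd_def by (rule adj[OF X])
  have adjA': "cinner (Ad v) w = cinner v (A w)" for v w unfolding Ad_def by (rule adj'[OF A])
  have adjB': "cinner (Bd v) w = cinner v (B w)" for v w unfolding Bd_def by (rule adj'[OF B])
  have adjX': "cinner (Xd v) w = cinner v (X w)" for v w unfolding Xd_def by (rule adj'[OF X])
  define M where "M = op_matrix (X \<circ> B \<circ> Ad) (\<lambda>_. 0) (\<lambda>_. 0) (B \<circ> Ad \<circ> X)"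
  define N where "N = (\<lambda>x. A (Ad (X x)) + X (B (Bd x)))"
  define K where "K = numerical_radius M + onorm N / 2"
  have T1: "bounded_op (\<lambda>v. X (B (Ad v)))" by (rule bop_comp[OF X bop_comp[OF B Ad]])
  have T2: "bounded_op (\<lambda>v. B (Ad (X v)))" by (rule bop_comp[OF B bop_comp[OF Ad X]])
  have Nop: "bounded_op N" unfolding N_def
    by (rule bop_plus[OF bop_comp[OF A bop_comp[OF Ad X]] bop_comp[OF X bop_comp[OF B Bd]]])
  have Nbl: "bounded_linear N" using Nop by (rule bop_bl)
  obtain c1 where c1: "c1 > 0" "\<And>v. norm (X (B (Ad v))) \<le> c1 * norm v" using bop_bound[OF T1] by blast
  obtain c2 where c2: "c2 > 0" "\<And>v. norm (B (Ad (X v))) \<le> c2 * norm v" using bop_bound[OF T2] by blast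
  have Mpair: "M (a, b) = (X (B (Ad a)), B (Ad (X b)))" for a b by (simp add: M_def op_matrix_def)
  have Mhom: "M (scaleC c p) = scaleC c (M p)" for c p
  proof (cases p)
    case (Pair a b)
    then show ?thesis by (simp add: Mpair scaleC_prod_def bop_hom[OF T1] bop_hom[OF T2])
  qed
  have Mbnd: "cmod (cinner (M p) p) \<le> (c1 + c2) * (norm p)^2" for p
  proof (cases p)
    case (Pair a b)
    have "cmod (cinner (M p) p) = cmod (cinner (X (B (Ad a))) a + cinner (B (Ad (X b))) b)"
      by (simp add: Pair Mpair cinner_prod_def)
    also have "\<dots> \<le> cmod (cinner (X (B (Ad a))) a) + cmod (cinner (B (Ad (X b))) b)" by (rule norm_triangle_ineq)
    also have "\<dots> \<le> c1 * (norm a)^2 + c2 * (norm b)^2"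
    proof (rule add_mono)
      have "cmod (cinner (X (B (Ad a))) a) \<le> norm (X (B (Ad a))) * norm a" by (rule cauchy_schwarz)
      also have "\<dots> \<le> c1 * norm a * norm a" by (rule mult_right_mono[OF c1(2)]) simp
      finally show "cmod (cinner (X (B (Ad a))) a) \<le> c1 * (norm a)^2" by (simp add: power2_eq_square mult.assoc)
      have "cmod (cinner (B (Ad (X b))) b) \<le> norm (B (Ad (X b))) * norm b" by (rule cauchy_schwarz)
      also have "\<dots> \<le> c2 * norm b * norm b" by (rule mult_right_mono[OF c2(2)]) simp
      finally show "cmod (cinner (B (Ad (X b))) b) \<le> c2 * (norm b)^2" by (simp add: power2_eq_square mult.assoc)
    qed
    also have "\<dots> \<le> (c1 + c2) * ((norm a)^2 + (norm b)^2)" using c1 c2 by (simp add: algebra_simps)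
    finally show ?thesis by (simp add: Pair normsq_prod)
  qed
  have wM0: "0 \<le> numerical_radius M" by (rule nr_upper(1)[OF Mhom Mbnd])
  have wM: "cmod (cinner (X (B (Ad q))) q + cinner (B (Ad (X p))) p) \<le> numerical_radius M * ((norm q)^2 + (norm p)^2)" for p q
    using nr_upper(2)[OF Mhom Mbnd, of "(q, p)"] by (simp add: Mpair cinner_prod_def normsq_prod)
  have N0: "0 \<le> onorm N" by (rule onorm_pos_le[OF Nbl])
  have K0: "0 \<le> K" using wM0 N0 by (simp add: K_def)
  show "0 \<le> numerical_radius (op_matrix (X \<circ> B \<circ> cadjoint A) (\<lambda>_. 0) (\<lambda>_. 0) (B \<circ> cadjoint A \<circ> X))
      + onorm (\<lambda>x. A (cadjoint A (X x)) + X (B (cadjoint B x))) / 2"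
    using K0 by (simp add: K_def M_def N_def Ad_def Bd_def)
  assume u: "cmod u = 1" and x0: "norm x0 = 1"
  define S where "S = (\<lambda>y. scaleC u (Ad (X (B y))) + scaleC (cnj u) (Bd (Xd (A y))))"
  have Sop: "bounded_op S" unfolding S_def
    by (rule bop_plus[OF bop_scal[OF bop_comp[OF Ad bop_comp[OF X B]]] bop_scal[OF bop_comp[OF Bd bop_comp[OF Xd A]]]])
  have F: "Re (cinner (B (S x)) (B x) + cinner (A (S x)) (A x)) \<le> K * ((norm (B x))^2 + (norm (A x))^2)" for x
  proof -
    define p where "p = B x"
    define q where "q = A x"
    define a1 where "a1 = cinner (B (Ad (X p))) p"
    define b1 where "b1 = cinner (X (B (Bd p))) q"
    define a2 where "a2 = cinner (A (Ad (X p))) q"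
    define b2 where "b2 = cinner (X (B (Ad q))) q"
    have e1: "cinner (B (S x)) p = cnj u * a1 + u * cnj b1"
    proof -
      have "B (S x) = scaleC u (B (Ad (X p))) + scaleC (cnj u) (B (Bd (Xd q)))"
        by (simp add: S_def p_def q_def bop_lin[OF B] bop_hom[OF B])
      then have "cinner (B (S x)) p = cnj u * a1 + u * cinner (B (Bd (Xd q))) p"
        by (simp add: cinner_add_left cinner_scaleC_left a1_def)
      also have "cinner (B (Bd (Xd q))) p = cnj b1"
      proof -
        have "cinner (B (Bd (Xd q))) p = cinner (Bd (Xd q)) (Bd p)" by (rule adjB)
        also have "\<dots> = cinner (Xd q) (B (Bd p))" by (rule adjB')
        also have "\<dots> = cinner q (X (B (Bd p)))" by (rule adjX')
        also have "\<dots> = cnj b1" unfolding b1_def by (rule cinner_commute)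
        finally show ?thesis .
      qed
      finally show ?thesis .
    qed
    have e2: "cinner (A (S x)) q = cnj u * a2 + u * cnj b2"
    proof -
      have "A (S x) = scaleC u (A (Ad (X p))) + scaleC (cnj u) (A (Bd (Xd q)))"
        by (simp add: S_def p_def q_def bop_lin[OF A] bop_hom[OF A])
      then have "cinner (A (S x)) q = cnj u * a2 + u * cinner (A (Bd (Xd q))) q"
        by (simp add: cinner_add_left cinner_scaleC_left a2_def)
      also have "cinner (A (Bd (Xd q))) q = cnj b2"
      proof -
        have "cinner (A (Bd (Xd q))) q = cinner (Bd (Xd q)) (Ad q)" by (rule adjA)
        also have "\<dots> = cinner (Xd q) (B (Ad q))" by (rule adjB')
        also have "\<dots> = cinner q (X (B (Ad q)))" by (rule adjX')
        also have "\<dots> = cnj b2" unfolding b2_def by (rule cinner_commute)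
        finally show ?thesis .
      qed
      finally show ?thesis .
    qed
    have "Re (cinner (B (S x)) (B x) + cinner (A (S x)) (A x))
        = Re (cnj u * (b2 + a1)) + Re (cnj u * (a2 + b1))"
      unfolding p_def[symmetric] q_def[symmetric] e1 e2 by (simp add: algebra_simps)
    also have "\<dots> \<le> cmod (b2 + a1) + cmod (a2 + b1)" by (rule add_mono[OF Re_cnj_le[OF u] Re_cnj_le[OF u]])
    also have "cmod (b2 + a1) \<le> numerical_radius M * ((norm q)^2 + (norm p)^2)"
      unfolding a1_def b2_def by (rule wM)
    also have "cmod (a2 + b1) \<le> onorm N * ((norm p)^2 + (norm q)^2) / 2"
    proof -
      have "a2 + b1 = cinner (N p) q" by (simp add: a2_def b1_def N_def cinner_add_left)
      then have "cmod (a2 + b1) \<le> norm (N p) * norm q" by (simp add: cauchy_schwarz)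
      also have "\<dots> \<le> onorm N * norm p * norm q" by (rule mult_right_mono[OF onorm[OF Nbl]]) simp
      also have "\<dots> \<le> onorm N * (((norm p)^2 + (norm q)^2) / 2)"
      proof -
        have "norm p * norm q \<le> ((norm p)^2 + (norm q)^2) / 2"
        proof -
          have h: "(norm p - norm q)^2 = (norm p)^2 + (norm q)^2 - 2 * (norm p * norm q)"
            by (simp add: power2_diff mult.assoc)
          have gen: "\<And>a b c::real. 0 \<le> a + b - 2 * c \<Longrightarrow> c \<le> (a + b) / 2"
            by (simp add: field_simps)
          have "0 \<le> (norm p - norm q)^2" by simp
          then show ?thesis unfolding h by (rule gen)
        qed
        then show ?thesis using N0 by (simp add: mult.assoc mult_left_mono)
      qed
      finally show ?thesis by simp
    qed
    finally show ?thesis by (simp add: K_def p_def q_def algebra_simps add_divide_distrib)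
  qed
  have H: "cinner (S y) w = cinner y (S w)" for y w
  proof -
    have l: "cinner (S y) w = cnj u * cinner (X (B y)) (A w) + u * cinner (A y) (X (B w))"
      by (simp add: S_def cinner_add_left cinner_scaleC_left adjA' adjB' adjX')
    have r: "cinner y (S w) = u * cinner (A y) (X (B w)) + cnj u * cinner (X (B y)) (A w)"
      by (simp add: S_def cinner_add_right cinner_scaleC_right adjA[symmetric] adjB[symmetric] adjX[symmetric])
    show ?thesis using l r by simp
  qed
  obtain c3 where c3: "c3 > 0" "\<And>v. norm (Ad (X v)) \<le> c3 * norm v" using bop_bound[OF bop_comp[OF Ad X]] by blast
  obtain c4 where c4: "c4 > 0" "\<And>v. norm (Bd (Xd v)) \<le> c4 * norm v" using bop_bound[OF bop_comp[OF Bd Xd]] by blast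
  have C: "norm (S v) \<le> (c3 + c4) * (norm (A v) + norm (B v))" for v
  proof -
    have "norm (S v) \<le> norm (scaleC u (Ad (X (B v)))) + norm (scaleC (cnj u) (Bd (Xd (A v))))"
      unfolding S_def by (rule norm_triangle_ineq)
    also have "\<dots> = norm (Ad (X (B v))) + norm (Bd (Xd (A v)))" using u by (simp add: norm_scaleC)
    also have "\<dots> \<le> c3 * norm (B v) + c4 * norm (A v)" using c3(2) c4(2) by (rule add_mono)
    also have "\<dots> \<le> (c3 + c4) * (norm (A v) + norm (B v))" using c3 c4 by (simp add: algebra_simps)
    finally show ?thesis .
  qed
  have "Re (cinner (S x0) x0) \<le> K"
    by (rule eig_bound[OF Sop A B K0 F H C _ x0]) (use c3 c4 in simp)
  then show "Re (cinner (scaleC u (cadjoint A (X (B x0))) + scaleC (cnj u) (cadjoint B (cadjoint X (A x0)))) x0)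
    \<le> numerical_radius (op_matrix (X \<circ> B \<circ> cadjoint A) (\<lambda>_. 0) (\<lambda>_. 0) (B \<circ> cadjoint A \<circ> X))
      + onorm (\<lambda>x. A (cadjoint A (X x)) + X (B (cadjoint B x))) / 2"
    by (simp add: S_def K_def M_def N_def Ad_def Bd_def Xd_def)
qed

theorem mainTheorem7:
  fixes A B X :: "'a::chilbert_space \<Rightarrow> 'a"
  assumes "bounded_op A" and "bounded_op B" and "bounded_op X"
  shows "numerical_radius (cadjoint A \<circ> X \<circ> B)
    \<le> 1/4 * onorm (\<lambda>x. A (cadjoint A (X x)) + X (B (cadjoint B x)))
      + 1/2 * numerical_radius
          (op_matrix (X \<circ> B \<circ> cadjoint A) (\<lambda>_. 0) (\<lambda>_. 0) (B \<circ> cadjoint A \<circ> X))"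
proof -
  note A = assms(1) and B = assms(2) and X = assms(3)
  define wM where "wM = numerical_radius (op_matrix (X \<circ> B \<circ> cadjoint A) (\<lambda>_. 0) (\<lambda>_. 0) (B \<circ> cadjoint A \<circ> X))"
  define nN where "nN = onorm (\<lambda>x. A (cadjoint A (X x)) + X (B (cadjoint B x)))"
  have key': "Re (cinner (scaleC u (cadjoint A (X (B x))) + scaleC (cnj u) (cadjoint B (cadjoint X (A x)))) x)
      \<le> wM + nN / 2" if "cmod u = 1" "norm x = 1" for u x
    unfolding wM_def nN_def by (rule key(2)[OF A B X that])
  have nonneg: "0 \<le> wM + nN / 2" unfolding wM_def nN_def by (rule key(1)[OF A B X])
  have "numerical_radius (cadjoint A \<circ> X \<circ> B) \<le> (wM + nN / 2) / 2"
  proof (rule nr_least)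
    show "0 \<le> (wM + nN / 2) / 2" using nonneg by simp
    fix x :: 'a assume x: "norm x = 1"
    define t where "t = cinner ((cadjoint A \<circ> X \<circ> B) x) x"
    show "cmod (cinner ((cadjoint A \<circ> X \<circ> B) x) x) \<le> (wM + nN / 2) / 2"
    proof (cases "t = 0")
      case True then show ?thesis using nonneg by (simp add: t_def)
    next
      case False
      define u where "u = t / of_real (cmod t)"
      have u: "cmod u = 1" using False by (simp add: u_def norm_divide)
      have t': "t = cinner (cadjoint A (X (B x))) x" by (simp add: t_def)
      have ct: "cinner (cadjoint B (cadjoint X (A x))) x = cnj t"
      proof -
        have "cinner (cadjoint B (cadjoint X (A x))) x = cinner (cadjoint X (A x)) (B x)" by (rule adj'[OF B])
        also have "\<dots> = cinner (A x) (X (B x))" by (rule adj'[OF X])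
        also have "\<dots> = cinner x (cadjoint A (X (B x)))" by (rule adj[OF A])
        also have "\<dots> = cnj t" unfolding t' by (rule cinner_commute)
        finally show ?thesis .
      qed
      have ceq: "cinner (scaleC u (cadjoint A (X (B x))) + scaleC (cnj u) (cadjoint B (cadjoint X (A x)))) x
          = cnj u * t + u * cnj t"
        by (simp add: cinner_add_left cinner_scaleC_left ct t')
      have cu: "cnj u * t = of_real (cmod t)"
      proof -
        have "cnj u * t = (cnj t * t) / of_real (cmod t)" by (simp add: u_def)
        also have "cnj t * t = of_real ((cmod t)^2)" by (metis complex_norm_square mult.commute)
        finally show ?thesis using False by (simp add: power2_eq_square)
      qed
      have "Re (cnj u * t + u * cnj t) = Re (cnj u * t) + Re (cnj u * t)"
        using Re_u_cnj[of u t] by simp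
      also have "\<dots> = 2 * cmod t" unfolding cu by simp
      finally have "Re (cinner (scaleC u (cadjoint A (X (B x))) + scaleC (cnj u) (cadjoint B (cadjoint X (A x)))) x)
          = 2 * cmod t" unfolding ceq .
      then have "2 * cmod t \<le> wM + nN / 2" using key'[OF u x] by simp
      then show ?thesis by (simp add: t_def)
    qed
  qed
  then show ?thesis by (simp add: wM_def nN_def algebra_simps)
qed

end
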